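(* Let $f:\mathbb{R}^d\to\mathbb{R}$ be a quadratic function (a polynomial of total degree at most $2$) and let $\theta\in\mathbb{R}^d$ be a unit vector. Then, with $\boldsymbol{x}\sim\mathcal{N}(0,I_d)$, $$\overline{\tau}^2_\theta=\theta^{\top}\,\mathbb{E}\biggl[\nabla f\Bigl(\tfrac{\theta\theta^{\top}\boldsymbol{x}}{\sqrt2}+(I-\theta\theta^{\top})\boldsymbol{x}\Bigr)\nabla f\Bigl(\tfrac{\theta\theta^{\top}\boldsymbol{x}}{\sqrt2}+(I-\theta\theta^{\top})\boldsymbol{x}\Bigr)^{\top}\biggr]\theta.$$
   Context: For a unit vector $\theta\in\mathbb{R}^d$ and $f$ with $\mathbb{E}(f(\boldsymbol{x})^2)<\infty$, the Sobol' index of the projection $\theta^\top\boldsymbol{x}$ is $$\overline{\tau}^2_\theta=\frac12\,\mathbb{E}\Bigl[\bigl(f(\boldsymbol{x})-f(\theta\theta^{\top}\boldsymbol{z}+(I-\theta\theta^{\top})\boldsymbol{x})\bigr)^2\Bigr],$$ where $\boldsymbol{x},\boldsymbol{z}\sim\mathcal{N}(0,I_d)$ are independent. Equivalently, it is the total Sobol' index of the first input of $\boldsymbol{x}\mapsto f(\Theta\boldsymbol{x})$ for any orthogonal $\Theta$ whose first column is $\theta$. *)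

theory Defs
  imports "HOL-Probability.Probability"
begin

definition std_gauss :: "(real ^ 'n) measure" where
  "std_gauss = density lborel
     (\<lambda>x. ennreal ((2 * pi) powr (- real CARD('n) / 2) * exp (- (norm x)\<^sup>2 / 2)))"

definition quadratic_fun :: "(real ^ 'n \<Rightarrow> real) \<Rightarrow> bool" where
  "quadratic_fun f \<longleftrightarrow> (\<exists>(A :: real ^ 'n ^ 'n) (b :: real ^ 'n) (c :: real).
     \<forall>x. f x = c + (\<Sum>i\<in>UNIV. b $ i * x $ i)
              + (\<Sum>i\<in>UNIV. \<Sum>j\<in>UNIV. A $ i $ j * x $ i * x $ j))"

definition grad :: "(real ^ 'n \<Rightarrow> real) \<Rightarrow> real ^ 'n \<Rightarrow> real ^ 'n" where
  "grad f x = (SOME g. GDERIV f x :> g)"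

definition sobol_proj :: "(real ^ 'n \<Rightarrow> real) \<Rightarrow> real ^ 'n \<Rightarrow> real" where
  "sobol_proj f \<theta> = 1 / 2 * (\<integral>p. (f (fst p) - f ((\<theta> \<bullet> snd p) *\<^sub>R \<theta> + (fst p - (\<theta> \<bullet> fst p) *\<^sub>R \<theta>)))\<^sup>2
      \<partial>(std_gauss \<Otimes>\<^sub>M std_gauss))"

end

theory Submission
  imports Defs
begin


lemma gauss_density_prod:
  fixes x :: "real ^ 'n"
  shows "(2 * pi) powr (- real CARD('n) / 2) * exp (- (norm x)\<^sup>2 / 2)
     = (\<Prod>b\<in>Basis. std_normal_density (x \<bullet> b))"
proof -
  have n2: "(norm x)\<^sup>2 = (\<Sum>b\<in>Basis. (x \<bullet> b)\<^sup>2)"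
  proof -
    have "(norm x)\<^sup>2 = x \<bullet> x" by (rule power2_norm_eq_inner)
    also have "\<dots> = (\<Sum>b\<in>Basis. (x \<bullet> b) * (x \<bullet> b))" by (rule euclidean_inner)
    also have "\<dots> = (\<Sum>b\<in>Basis. (x \<bullet> b)\<^sup>2)" by (simp add: power2_eq_square)
    finally show ?thesis .
  qed
  have "exp (- (norm x)\<^sup>2 / 2) = (\<Prod>b\<in>Basis. exp (- (x \<bullet> b)\<^sup>2 / 2))"
    unfolding n2 by (simp add: exp_sum[symmetric] sum_negf sum_divide_distrib)
  moreover have "(2 * pi) powr (- real CARD('n) / 2) = (\<Prod>b\<in>(Basis::(real^'n) set). 1 / sqrt (2*pi))"
  proof -
    have "(\<Prod>b\<in>(Basis::(real^'n) set). 1 / sqrt (2*pi)) = (1 / sqrt (2*pi)) ^ CARD('n)"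
      by simp
    also have "\<dots> = ((2*pi) powr (-1/2)) ^ CARD('n)"
      by (simp add: powr_minus_divide powr_half_sqrt[symmetric])
    also have "\<dots> = (2 * pi) powr (- real CARD('n) / 2)"
      by (simp add: powr_realpow[symmetric] powr_powr)
    finally show ?thesis by simp
  qed
  moreover have "(\<Prod>b\<in>Basis. std_normal_density (x \<bullet> b)) =
     (\<Prod>b\<in>(Basis::(real^'n) set). 1 / sqrt (2*pi)) * (\<Prod>b\<in>Basis. exp (- (x \<bullet> b)\<^sup>2 / 2))"
    unfolding prod.distrib[symmetric] std_normal_density_def by simp
  ultimately show ?thesis by simp
qed

lemma gauss_prod:
  fixes m :: "real ^ 'n \<Rightarrow> real \<Rightarrow> real"
  assumes meas[measurable]: "\<And>b. b \<in> Basis \<Longrightarrow> m b \<in> borel_measurable borel"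
    and int: "\<And>b. b \<in> Basis \<Longrightarrow> integrable lborel (\<lambda>y. std_normal_density y * m b y)"
  shows "has_bochner_integral std_gauss (\<lambda>x. \<Prod>b\<in>Basis. m b (x \<bullet> b))
           (\<Prod>b\<in>Basis. \<integral>y. std_normal_density y * m b y \<partial>lborel)"
proof -
  interpret product_sigma_finite "\<lambda>_::real^'n. lborel :: real measure" by standard
  define k where "k b y = std_normal_density y * m b y" for b y
  have [measurable]: "b \<in> Basis \<Longrightarrow> k b \<in> borel_measurable borel" for b
    unfolding k_def by measurable
  have mP: "(\<lambda>x::real^'n. \<Prod>b\<in>Basis. m b (x \<bullet> b)) \<in> borel_measurable borel"
    by measurable
  have mK: "(\<lambda>x::real^'n. \<Prod>b\<in>Basis. k b (x \<bullet> b)) \<in> borel_measurable borel"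
    by measurable
  have eq: "(\<Prod>b\<in>Basis. k b ((\<Sum>b'\<in>Basis. f b' *\<^sub>R b') \<bullet> b)) = (\<Prod>b\<in>Basis. k b (f b))" for f :: "real^'n \<Rightarrow> real"
    by (intro prod.cong refl) (simp add: inner_sum_left inner_Basis if_distrib sum.delta cong: if_cong)
  have "has_bochner_integral (Pi\<^sub>M Basis (\<lambda>_. lborel)) (\<lambda>f. \<Prod>b\<in>Basis. k b (f b))
           (\<Prod>b\<in>Basis. integral\<^sup>L lborel (k b))"
    using int unfolding k_def[abs_def] has_bochner_integral_iff
    by (auto intro!: product_integrable_prod product_integral_prod)
  then have "has_bochner_integral (distr (Pi\<^sub>M Basis (\<lambda>_. lborel)) borel (\<lambda>f. \<Sum>b\<in>Basis. f b *\<^sub>R b))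
      (\<lambda>x::real^'n. \<Prod>b\<in>Basis. k b (x \<bullet> b)) (\<Prod>b\<in>Basis. integral\<^sup>L lborel (k b))"
    by (intro has_bochner_integral_distr mK) (auto simp: eq)
  then have "has_bochner_integral lborel
      (\<lambda>x::real^'n. \<Prod>b\<in>Basis. k b (x \<bullet> b)) (\<Prod>b\<in>Basis. integral\<^sup>L lborel (k b))"
    by (simp add: lborel_eq[symmetric])
  then have "has_bochner_integral lborel
      (\<lambda>x::real^'n. ((2 * pi) powr (- real CARD('n) / 2) * exp (- (norm x)\<^sup>2 / 2)) *\<^sub>R (\<Prod>b\<in>Basis. m b (x \<bullet> b)))
      (\<Prod>b\<in>Basis. integral\<^sup>L lborel (k b))"
    unfolding gauss_density_prod by (simp add: k_def prod.distrib)
  then show ?thesis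
    unfolding std_gauss_def k_def[abs_def]
    by (intro has_bochner_integral_density mP) auto
qed

lemma hbi_mom: "has_bochner_integral lborel (\<lambda>y. std_normal_density y * y ^ n)
   (if even n then fact n / (2 ^ (n div 2) * fact (n div 2)) else 0)"
proof (cases "even n")
  case True
  then obtain k where "n = 2 * k" by blast
  then show ?thesis using std_normal_moment_even[of k] by simp
next
  case False
  then obtain k where "n = 2 * k + 1" using oddE by blast
  then show ?thesis using std_normal_moment_odd[of k] by simp
qed

definition mom :: "nat \<Rightarrow> real" where
  "mom n = (if even n then fact n / (2 ^ (n div 2) * fact (n div 2)) else 0)"

lemma mom_vals: "mom 0 = 1" "mom 1 = 0" "mom 2 = 1" "mom 3 = 0" "mom 4 = 3"
  by (simp_all add: mom_def fact_numeral)

lemma mom_Suc: "mom (Suc 0) = 0" "mom (Suc (Suc 0)) = 1" "mom (Suc (Suc (Suc 0))) = 0" "mom (Suc (Suc (Suc (Suc 0)))) = 3"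
  using mom_vals by (simp_all add: numeral_eq_Suc)

lemma gauss_monomial:
  fixes c :: "real ^ 'n \<Rightarrow> nat"
  shows "has_bochner_integral std_gauss (\<lambda>x. \<Prod>b\<in>Basis. (x \<bullet> b) ^ c b) (\<Prod>b\<in>Basis. mom (c b))"
proof -
  have "has_bochner_integral std_gauss (\<lambda>x. \<Prod>b\<in>Basis. (\<lambda>y. y ^ c b) (x \<bullet> b))
           (\<Prod>b\<in>Basis. \<integral>y. std_normal_density y * (\<lambda>y. y ^ c b) y \<partial>lborel)"
    by (rule gauss_prod) (use hbi_mom in \<open>auto simp: integrable.simps\<close>)
  moreover have "(\<integral>y. std_normal_density y * y ^ n \<partial>lborel) = mom n" for n
    using hbi_mom[of n] unfolding mom_def by (rule has_bochner_integral_integral_eq)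
  ultimately show ?thesis by simp
qed

lemma prod_pow_delta:
  fixes y :: "real ^ 'n \<Rightarrow> real"
  assumes "b1 \<in> Basis"
  shows "(\<Prod>b\<in>Basis. y b ^ (of_bool (b = b1))) = y b1"
proof -
  have "(\<Prod>b\<in>Basis. y b ^ (of_bool (b = b1))) = (\<Prod>b\<in>Basis. if b = b1 then y b else 1)"
    by (intro prod.cong) auto
  also have "\<dots> = y b1" using assms by (simp add: prod.delta)
  finally show ?thesis .
qed

lemma prod_mom_restrict:
  fixes c :: "real ^ 'n \<Rightarrow> nat"
  assumes "S \<subseteq> Basis" "\<And>b. b \<in> Basis \<Longrightarrow> b \<notin> S \<Longrightarrow> c b = 0"
  shows "(\<Prod>b\<in>Basis. mom (c b)) = (\<Prod>b\<in>S. mom (c b))"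
  using assms by (intro prod.mono_neutral_right) (auto simp: mom_vals)

lemma gauss_m4:
  fixes b1 b2 b3 b4 :: "real ^ 'n"
  assumes B: "b1 \<in> Basis" "b2 \<in> Basis" "b3 \<in> Basis" "b4 \<in> Basis"
  shows "has_bochner_integral std_gauss (\<lambda>x. (x \<bullet> b1) * (x \<bullet> b2) * (x \<bullet> b3) * (x \<bullet> b4))
     (of_bool (b1 = b2) * of_bool (b3 = b4) + of_bool (b1 = b3) * of_bool (b2 = b4) + of_bool (b1 = b4) * of_bool (b2 = b3))"
proof -
  define c where "c b = of_bool (b = b1) + of_bool (b = b2) + of_bool (b = b3) + (of_bool (b = b4) :: nat)" for b :: "real^'n"
  have eq: "(\<Prod>b\<in>Basis. (x \<bullet> b) ^ c b) = (x \<bullet> b1) * (x \<bullet> b2) * (x \<bullet> b3) * (x \<bullet> b4)" for x :: "real^'n"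
    unfolding c_def power_add prod.distrib using B by (simp add: prod_pow_delta)
  have "(\<Prod>b\<in>Basis. mom (c b)) = (\<Prod>b\<in>{b1,b2,b3,b4}. mom (c b))"
    using B by (intro prod_mom_restrict) (auto simp: c_def)
  also have "\<dots> = of_bool (b1 = b2) * of_bool (b3 = b4) + of_bool (b1 = b3) * of_bool (b2 = b4) + of_bool (b1 = b4) * of_bool (b2 = b3)"
    unfolding c_def
    by (cases "b1 = b2"; cases "b1 = b3"; cases "b1 = b4"; cases "b2 = b3"; cases "b2 = b4"; cases "b3 = b4")
       (simp_all add: mom_vals mom_Suc insert_absorb)
  finally show ?thesis using gauss_monomial[of c] by (simp add: eq)
qed

lemma mult_of_bool_right: "(x::real) * of_bool P = (if P then x else 0)" by simp
lemma sum_if_const: "(\<Sum>x\<in>A. if P then f x else 0) = (if P then (\<Sum>x\<in>A. f x) else (0::real))" by simp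

lemma test_sum4:
  fixes a1 a2 a3 a4 :: "real ^ 'n"
  shows "(\<Sum>b1\<in>Basis. \<Sum>b2\<in>Basis. \<Sum>b3\<in>Basis. \<Sum>b4\<in>Basis.
     (a1 \<bullet> b1) * (a2 \<bullet> b2) * (a3 \<bullet> b3) * (a4 \<bullet> b4) *
     (of_bool (b1 = b2) * of_bool (b3 = b4) + of_bool (b1 = b3) * of_bool (b2 = b4) + of_bool (b1 = b4) * of_bool (b2 = b3)))
   = (a1 \<bullet> a2) * (a3 \<bullet> a4) + (a1 \<bullet> a3) * (a2 \<bullet> a4) + (a1 \<bullet> a4) * (a2 \<bullet> a3)"
proof -
  have ip: "u \<bullet> v = (\<Sum>b\<in>Basis. (u \<bullet> b) * (v \<bullet> b))" for u v :: "real^'n"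
    by (rule euclidean_inner)
  show ?thesis
    apply (simp only: distrib_left sum.distrib mult.assoc[symmetric])
    apply (simp only: mult_of_bool_right)
    apply (simp add: sum_if_const sum.delta sum.delta' cong: sum.cong_simp)
    apply (simp only: ip[of a1 a2] ip[of a3 a4] ip[of a1 a3] ip[of a2 a4] ip[of a1 a4] ip[of a2 a3] sum_product)
    apply (simp add: ac_simps)
    done
qed



lemma gauss_m0: "has_bochner_integral std_gauss (\<lambda>x::real^'n. 1::real) 1"
  using gauss_monomial[of "\<lambda>_. 0"] by (simp add: mom_vals)

lemma gauss_m1:
  fixes b1 :: "real ^ 'n"
  assumes B: "b1 \<in> Basis"
  shows "has_bochner_integral std_gauss (\<lambda>x. (x \<bullet> b1)) 0"
proof -
  define c where "c b = (of_bool (b = b1) :: nat)" for b :: "real^'n"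
  have eq: "(\<Prod>b\<in>Basis. (x \<bullet> b) ^ c b) = (x \<bullet> b1)" for x :: "real^'n"
    unfolding c_def using B by (simp add: prod_pow_delta)
  have "(\<Prod>b\<in>Basis. mom (c b)) = (\<Prod>b\<in>{b1}. mom (c b))"
    using B by (intro prod_mom_restrict) (auto simp: c_def)
  also have "\<dots> = 0"
    unfolding c_def by (simp add: mom_vals mom_Suc insert_absorb)
  finally show ?thesis using gauss_monomial[of c] unfolding eq by (simp only:)
qed

lemma gauss_m2:
  fixes b1 b2 :: "real ^ 'n"
  assumes B: "b1 \<in> Basis" "b2 \<in> Basis"
  shows "has_bochner_integral std_gauss (\<lambda>x. (x \<bullet> b1) * (x \<bullet> b2)) (of_bool (b1 = b2))"
proof -
  define c where "c b = of_bool (b = b1) + (of_bool (b = b2) :: nat)" for b :: "real^'n"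
  have eq: "(\<Prod>b\<in>Basis. (x \<bullet> b) ^ c b) = (x \<bullet> b1) * (x \<bullet> b2)" for x :: "real^'n"
    unfolding c_def power_add prod.distrib using B by (simp add: prod_pow_delta)
  have "(\<Prod>b\<in>Basis. mom (c b)) = (\<Prod>b\<in>{b1,b2}. mom (c b))"
    using B by (intro prod_mom_restrict) (auto simp: c_def)
  also have "\<dots> = of_bool (b1 = b2)"
    unfolding c_def
    by (cases "b1 = b2") (simp_all add: mom_vals mom_Suc insert_absorb)
  finally show ?thesis using gauss_monomial[of c] unfolding eq by (simp only:)
qed

lemma gauss_m3:
  fixes b1 b2 b3 :: "real ^ 'n"
  assumes B: "b1 \<in> Basis" "b2 \<in> Basis" "b3 \<in> Basis"
  shows "has_bochner_integral std_gauss (\<lambda>x. (x \<bullet> b1) * (x \<bullet> b2) * (x \<bullet> b3)) 0"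
proof -
  define c where "c b = of_bool (b = b1) + of_bool (b = b2) + (of_bool (b = b3) :: nat)" for b :: "real^'n"
  have eq: "(\<Prod>b\<in>Basis. (x \<bullet> b) ^ c b) = (x \<bullet> b1) * (x \<bullet> b2) * (x \<bullet> b3)" for x :: "real^'n"
    unfolding c_def power_add prod.distrib using B by (simp add: prod_pow_delta)
  have "(\<Prod>b\<in>Basis. mom (c b)) = (\<Prod>b\<in>{b1,b2,b3}. mom (c b))"
    using B by (intro prod_mom_restrict) (auto simp: c_def)
  also have "\<dots> = 0"
    unfolding c_def
    by (cases "b1 = b2"; cases "b1 = b3"; cases "b2 = b3") (simp_all add: mom_vals mom_Suc insert_absorb)
  finally show ?thesis using gauss_monomial[of c] unfolding eq by (simp only:)
qed

lemma inner_expand: "(a::real^'n) \<bullet> x = (\<Sum>b\<in>Basis. (a \<bullet> b) * (x \<bullet> b))"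
  by (rule euclidean_inner)

lemma prod3_sum:
  fixes f g h :: "'a \<Rightarrow> real"
  shows "(\<Sum>i\<in>A. f i) * (\<Sum>j\<in>A. g j) * (\<Sum>k\<in>A. h k) = (\<Sum>i\<in>A. \<Sum>j\<in>A. \<Sum>k\<in>A. f i * g j * h k)"
proof -
  have "(\<Sum>i\<in>A. f i) * (\<Sum>j\<in>A. g j) * (\<Sum>k\<in>A. h k) = (\<Sum>i\<in>A. \<Sum>j\<in>A. f i * g j) * (\<Sum>k\<in>A. h k)"
    by (simp only: sum_product)
  also have "\<dots> = (\<Sum>i\<in>A. (\<Sum>j\<in>A. f i * g j) * (\<Sum>k\<in>A. h k))"
    by (rule sum_distrib_right)
  also have "\<dots> = (\<Sum>i\<in>A. \<Sum>j\<in>A. \<Sum>k\<in>A. f i * g j * h k)"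
    by (simp only: sum_product)
  finally show ?thesis .
qed

lemma prod4_sum:
  fixes f g h l :: "'a \<Rightarrow> real"
  shows "(\<Sum>i\<in>A. f i) * (\<Sum>j\<in>A. g j) * (\<Sum>k\<in>A. h k) * (\<Sum>m\<in>A. l m) = (\<Sum>i\<in>A. \<Sum>j\<in>A. \<Sum>k\<in>A. \<Sum>m\<in>A. f i * g j * h k * l m)"
proof -
  have "(\<Sum>i\<in>A. f i) * (\<Sum>j\<in>A. g j) * (\<Sum>k\<in>A. h k) * (\<Sum>m\<in>A. l m) = (\<Sum>i\<in>A. \<Sum>j\<in>A. \<Sum>k\<in>A. f i * g j * h k) * (\<Sum>m\<in>A. l m)"
    by (simp only: prod3_sum)
  also have "\<dots> = (\<Sum>i\<in>A. (\<Sum>j\<in>A. \<Sum>k\<in>A. f i * g j * h k) * (\<Sum>m\<in>A. l m))"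
    by (rule sum_distrib_right)
  also have "\<dots> = (\<Sum>i\<in>A. \<Sum>j\<in>A. (\<Sum>k\<in>A. f i * g j * h k) * (\<Sum>m\<in>A. l m))"
    by (simp only: sum_distrib_right)
  also have "\<dots> = (\<Sum>i\<in>A. \<Sum>j\<in>A. \<Sum>k\<in>A. \<Sum>m\<in>A. f i * g j * h k * l m)"
    by (simp only: sum_product)
  finally show ?thesis .
qed

lemma hbi_eq: "has_bochner_integral M f v \<Longrightarrow> (\<And>x. f x = g x) \<Longrightarrow> v = w \<Longrightarrow> has_bochner_integral M g w"
proof -
  assume "has_bochner_integral M f v" "\<And>x. f x = g x" "v = w"
  moreover have "f = g" using \<open>\<And>x. f x = g x\<close> by (rule ext)
  ultimately show ?thesis by simp
qed

lemma lin1: "has_bochner_integral std_gauss (\<lambda>x. (a1::real^'n) \<bullet> x) 0"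
proof -
  have "has_bochner_integral std_gauss (\<lambda>x. \<Sum>b1\<in>Basis. (a1 \<bullet> b1) * (x \<bullet> b1))
          (\<Sum>b1\<in>(Basis::(real^'n) set). (a1 \<bullet> b1) * 0)"
    by (intro has_bochner_integral_sum has_bochner_integral_mult_right gauss_m1) auto
  then show ?thesis by (rule hbi_eq) (simp_all only: inner_expand[symmetric] mult_zero_right sum.neutral_const)
qed

lemma lin2: "has_bochner_integral std_gauss (\<lambda>x. ((a1::real^'n) \<bullet> x) * (a2 \<bullet> x)) (a1 \<bullet> a2)"
proof -
  have H: "has_bochner_integral std_gauss (\<lambda>x. \<Sum>b1\<in>Basis. \<Sum>b2\<in>Basis. ((a1 \<bullet> b1) * (x \<bullet> b1)) * ((a2 \<bullet> b2) * (x \<bullet> b2)))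
          (\<Sum>b1\<in>(Basis::(real^'n) set). \<Sum>b2\<in>Basis. ((a1 \<bullet> b1) * (a2 \<bullet> b2)) * of_bool (b1 = b2))"
  proof (intro has_bochner_integral_sum)
    fix b1 b2 :: "real^'n" assume "b1 \<in> Basis" "b2 \<in> Basis"
    from has_bochner_integral_mult_right[OF gauss_m2[OF this], of "(a1 \<bullet> b1) * (a2 \<bullet> b2)"]
    show "has_bochner_integral std_gauss (\<lambda>x. ((a1 \<bullet> b1) * (x \<bullet> b1)) * ((a2 \<bullet> b2) * (x \<bullet> b2)))
       (((a1 \<bullet> b1) * (a2 \<bullet> b2)) * of_bool (b1 = b2))" by (simp only: ac_simps)
  qed
  have V: "(\<Sum>b1\<in>(Basis::(real^'n) set). \<Sum>b2\<in>Basis. ((a1 \<bullet> b1) * (a2 \<bullet> b2)) * of_bool (b1 = b2)) = a1 \<bullet> a2"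
    apply (simp only: mult_of_bool_right)
    apply (simp add: sum.delta sum.delta' cong: sum.cong_simp)
    apply (simp add: inner_expand[of a1 a2])
    done
  show ?thesis
  proof (rule hbi_eq[OF H])
    fix x :: "real^'n"
    show "(\<Sum>b1\<in>Basis. \<Sum>b2\<in>Basis. ((a1 \<bullet> b1) * (x \<bullet> b1)) * ((a2 \<bullet> b2) * (x \<bullet> b2))) = (a1 \<bullet> x) * (a2 \<bullet> x)"
      by (simp only: inner_expand[of a1 x] inner_expand[of a2 x] sum_product)
  qed (rule V)
qed

lemma lin3: "has_bochner_integral std_gauss (\<lambda>x. ((a1::real^'n) \<bullet> x) * (a2 \<bullet> x) * (a3 \<bullet> x)) 0"
proof -
  have H: "has_bochner_integral std_gauss (\<lambda>x. \<Sum>b1\<in>Basis. \<Sum>b2\<in>Basis. \<Sum>b3\<in>Basis. ((a1 \<bullet> b1) * (x \<bullet> b1)) * ((a2 \<bullet> b2) * (x \<bullet> b2)) * ((a3 \<bullet> b3) * (x \<bullet> b3)))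
          (\<Sum>b1\<in>(Basis::(real^'n) set). \<Sum>b2\<in>Basis. \<Sum>b3\<in>Basis. ((a1 \<bullet> b1) * (a2 \<bullet> b2) * (a3 \<bullet> b3)) * 0)"
  proof (intro has_bochner_integral_sum)
    fix b1 b2 b3 :: "real^'n" assume "b1 \<in> Basis" "b2 \<in> Basis" "b3 \<in> Basis"
    from has_bochner_integral_mult_right[OF gauss_m3[OF this], of "(a1 \<bullet> b1) * (a2 \<bullet> b2) * (a3 \<bullet> b3)"]
    show "has_bochner_integral std_gauss (\<lambda>x. ((a1 \<bullet> b1) * (x \<bullet> b1)) * ((a2 \<bullet> b2) * (x \<bullet> b2)) * ((a3 \<bullet> b3) * (x \<bullet> b3)))
       (((a1 \<bullet> b1) * (a2 \<bullet> b2) * (a3 \<bullet> b3)) * 0)"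
      by (simp only: ac_simps)
  qed
  show ?thesis
  proof (rule hbi_eq[OF H])
    fix x :: "real^'n"
    show "(\<Sum>b1\<in>Basis. \<Sum>b2\<in>Basis. \<Sum>b3\<in>Basis. ((a1 \<bullet> b1) * (x \<bullet> b1)) * ((a2 \<bullet> b2) * (x \<bullet> b2)) * ((a3 \<bullet> b3) * (x \<bullet> b3))) = (a1 \<bullet> x) * (a2 \<bullet> x) * (a3 \<bullet> x)"
      by (simp only: inner_expand[of a1 x] inner_expand[of a2 x] inner_expand[of a3 x] prod3_sum)
  qed simp
qed

lemma lin4: "has_bochner_integral std_gauss (\<lambda>x. ((a1::real^'n) \<bullet> x) * (a2 \<bullet> x) * (a3 \<bullet> x) * (a4 \<bullet> x))
   ((a1 \<bullet> a2) * (a3 \<bullet> a4) + (a1 \<bullet> a3) * (a2 \<bullet> a4) + (a1 \<bullet> a4) * (a2 \<bullet> a3))"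
proof -
  have H: "has_bochner_integral std_gauss (\<lambda>x. \<Sum>b1\<in>Basis. \<Sum>b2\<in>Basis. \<Sum>b3\<in>Basis. \<Sum>b4\<in>Basis. ((a1 \<bullet> b1) * (x \<bullet> b1)) * ((a2 \<bullet> b2) * (x \<bullet> b2)) * ((a3 \<bullet> b3) * (x \<bullet> b3)) * ((a4 \<bullet> b4) * (x \<bullet> b4)))
          (\<Sum>b1\<in>(Basis::(real^'n) set). \<Sum>b2\<in>Basis. \<Sum>b3\<in>Basis. \<Sum>b4\<in>Basis. ((a1 \<bullet> b1) * (a2 \<bullet> b2) * (a3 \<bullet> b3) * (a4 \<bullet> b4)) *
            (of_bool (b1 = b2) * of_bool (b3 = b4) + of_bool (b1 = b3) * of_bool (b2 = b4) + of_bool (b1 = b4) * of_bool (b2 = b3)))"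
  proof (intro has_bochner_integral_sum)
    fix b1 b2 b3 b4 :: "real^'n" assume "b1 \<in> Basis" "b2 \<in> Basis" "b3 \<in> Basis" "b4 \<in> Basis"
    from has_bochner_integral_mult_right[OF gauss_m4[OF this], of "(a1 \<bullet> b1) * (a2 \<bullet> b2) * (a3 \<bullet> b3) * (a4 \<bullet> b4)"]
    show "has_bochner_integral std_gauss (\<lambda>x. ((a1 \<bullet> b1) * (x \<bullet> b1)) * ((a2 \<bullet> b2) * (x \<bullet> b2)) * ((a3 \<bullet> b3) * (x \<bullet> b3)) * ((a4 \<bullet> b4) * (x \<bullet> b4)))
       (((a1 \<bullet> b1) * (a2 \<bullet> b2) * (a3 \<bullet> b3) * (a4 \<bullet> b4)) *
            (of_bool (b1 = b2) * of_bool (b3 = b4) + of_bool (b1 = b3) * of_bool (b2 = b4) + of_bool (b1 = b4) * of_bool (b2 = b3)))"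
      by (simp only: ac_simps)
  qed
  show ?thesis
  proof (rule hbi_eq[OF H])
    fix x :: "real^'n"
    show "(\<Sum>b1\<in>Basis. \<Sum>b2\<in>Basis. \<Sum>b3\<in>Basis. \<Sum>b4\<in>Basis. ((a1 \<bullet> b1) * (x \<bullet> b1)) * ((a2 \<bullet> b2) * (x \<bullet> b2)) * ((a3 \<bullet> b3) * (x \<bullet> b3)) * ((a4 \<bullet> b4) * (x \<bullet> b4))) = (a1 \<bullet> x) * (a2 \<bullet> x) * (a3 \<bullet> x) * (a4 \<bullet> x)"
      by (simp only: inner_expand[of a1 x] inner_expand[of a2 x] inner_expand[of a3 x] inner_expand[of a4 x] prod4_sum)
  qed (rule test_sum4)
qed



lemma poly4:
  fixes u v :: "real ^ 'n"
  shows "has_bochner_integral std_gauss (\<lambda>x. k00 + k10*(u\<bullet>x) + k01*(v\<bullet>x) + k20*(u\<bullet>x)^2 + k11*((u\<bullet>x)*(v\<bullet>x)) + k02*(v\<bullet>x)^2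
      + k30*(u\<bullet>x)^3 + k21*((u\<bullet>x)^2*(v\<bullet>x)) + k12*((u\<bullet>x)*(v\<bullet>x)^2) + k03*(v\<bullet>x)^3
      + k40*(u\<bullet>x)^4 + k31*((u\<bullet>x)^3*(v\<bullet>x)) + k22*((u\<bullet>x)^2*(v\<bullet>x)^2) + k13*((u\<bullet>x)*(v\<bullet>x)^3) + k04*(v\<bullet>x)^4)
    (k00 + k20*(u\<bullet>u) + k11*(u\<bullet>v) + k02*(v\<bullet>v) + 3*k40*(u\<bullet>u)^2 + 3*k31*(u\<bullet>u)*(u\<bullet>v)
      + k22*((u\<bullet>u)*(v\<bullet>v) + 2*(u\<bullet>v)^2) + 3*k13*(u\<bullet>v)*(v\<bullet>v) + 3*k04*(v\<bullet>v)^2)"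
proof -
  have H: "has_bochner_integral std_gauss (\<lambda>x. k00*1 + k10*(u\<bullet>x) + k01*(v\<bullet>x) + k20*((u\<bullet>x)*(u\<bullet>x)) + k11*((u\<bullet>x)*(v\<bullet>x)) + k02*((v\<bullet>x)*(v\<bullet>x))
      + k30*((u\<bullet>x)*(u\<bullet>x)*(u\<bullet>x)) + k21*((u\<bullet>x)*(u\<bullet>x)*(v\<bullet>x)) + k12*((u\<bullet>x)*(v\<bullet>x)*(v\<bullet>x)) + k03*((v\<bullet>x)*(v\<bullet>x)*(v\<bullet>x))
      + k40*((u\<bullet>x)*(u\<bullet>x)*(u\<bullet>x)*(u\<bullet>x)) + k31*((u\<bullet>x)*(u\<bullet>x)*(u\<bullet>x)*(v\<bullet>x)) + k22*((u\<bullet>x)*(u\<bullet>x)*(v\<bullet>x)*(v\<bullet>x))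
      + k13*((u\<bullet>x)*(v\<bullet>x)*(v\<bullet>x)*(v\<bullet>x)) + k04*((v\<bullet>x)*(v\<bullet>x)*(v\<bullet>x)*(v\<bullet>x)))
    (k00*1 + k10*0 + k01*0 + k20*(u\<bullet>u) + k11*(u\<bullet>v) + k02*(v\<bullet>v) + k30*0 + k21*0 + k12*0 + k03*0
      + k40*((u\<bullet>u)*(u\<bullet>u) + (u\<bullet>u)*(u\<bullet>u) + (u\<bullet>u)*(u\<bullet>u))
      + k31*((u\<bullet>u)*(u\<bullet>v) + (u\<bullet>u)*(u\<bullet>v) + (u\<bullet>v)*(u\<bullet>u))
      + k22*((u\<bullet>u)*(v\<bullet>v) + (u\<bullet>v)*(u\<bullet>v) + (u\<bullet>v)*(u\<bullet>v))
      + k13*((u\<bullet>v)*(v\<bullet>v) + (u\<bullet>v)*(v\<bullet>v) + (u\<bullet>v)*(v\<bullet>v))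
      + k04*((v\<bullet>v)*(v\<bullet>v) + (v\<bullet>v)*(v\<bullet>v) + (v\<bullet>v)*(v\<bullet>v)))"
    by (intro has_bochner_integral_add has_bochner_integral_mult_right lin1 lin2 lin3 lin4 gauss_m0)
  show ?thesis
    by (rule hbi_eq[OF H]) (simp_all add: power2_eq_square power3_eq_cube power4_eq_xxxx algebra_simps)
qed

lemma prob_space_std_gauss: "prob_space (std_gauss :: (real^'n) measure)"
proof (rule prob_spaceI)
  have I: "integrable (std_gauss :: (real^'n) measure) (\<lambda>x. 1::real)" and V: "(\<integral>x. (1::real) \<partial>(std_gauss :: (real^'n) measure)) = 1"
    using gauss_m0 by (auto simp: has_bochner_integral_iff)
  from I have fin: "emeasure (std_gauss :: (real^'n) measure) (space std_gauss) \<noteq> \<infinity>"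
    by (simp add: integrable_iff_bounded less_top[symmetric])
  from V have "measure (std_gauss :: (real^'n) measure) (space std_gauss) = 1" by simp
  with fin show "emeasure (std_gauss :: (real^'n) measure) (space std_gauss) = 1"
    by (simp add: emeasure_eq_ennreal_measure)
qed

lemma hbi_pair:
  fixes g h :: "real^'n \<Rightarrow> real"
  assumes g: "has_bochner_integral std_gauss g I" and h: "has_bochner_integral std_gauss h J"
  shows "has_bochner_integral (std_gauss \<Otimes>\<^sub>M std_gauss) (\<lambda>p. g (fst p) * h (snd p)) (I * J)"
proof -
  interpret P: prob_space "std_gauss :: (real^'n) measure" by (rule prob_space_std_gauss)
  interpret pair_sigma_finite "std_gauss :: (real^'n) measure" "std_gauss :: (real^'n) measure" ..
  have ig: "integrable std_gauss g" and vg: "integral\<^sup>L std_gauss g = I"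
    and ih: "integrable std_gauss h" and vh: "integral\<^sup>L std_gauss h = J"
    using g h by (auto simp: has_bochner_integral_iff)
  have [measurable]: "g \<in> borel_measurable std_gauss" "h \<in> borel_measurable std_gauss"
    using ig ih by auto
  have int: "integrable (std_gauss \<Otimes>\<^sub>M std_gauss) (\<lambda>p. g (fst p) * h (snd p))"
  proof (rule Fubini_integrable)
    show "(\<lambda>p. g (fst p) * h (snd p)) \<in> borel_measurable (std_gauss \<Otimes>\<^sub>M std_gauss)"
      by measurable
    have "(\<lambda>x. \<integral>y. norm (g (fst (x, y)) * h (snd (x, y))) \<partial>std_gauss) = (\<lambda>x. norm (g x) * (\<integral>y. norm (h y) \<partial>std_gauss))"
      by (simp add: abs_mult)
    moreover have "integrable std_gauss (\<lambda>x. norm (g x) * (\<integral>y. norm (h y) \<partial>std_gauss))"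
      using ig by (intro integrable_mult_left integrable_norm)
    ultimately show "integrable std_gauss (\<lambda>x. \<integral>y. norm (g (fst (x, y)) * h (snd (x, y))) \<partial>std_gauss)"
      by simp
    show "AE x in std_gauss. integrable std_gauss (\<lambda>y. g (fst (x, y)) * h (snd (x, y)))"
      using ih by simp
  qed
  have "integral\<^sup>L (std_gauss \<Otimes>\<^sub>M std_gauss) (\<lambda>p. g (fst p) * h (snd p)) = (\<integral>x. (\<integral>y. g (fst (x, y)) * h (snd (x, y)) \<partial>std_gauss) \<partial>std_gauss)"
    using integral_fst'[OF int] by simp
  also have "\<dots> = (\<integral>x. g x * J \<partial>std_gauss)" by (simp add: vh)
  also have "\<dots> = I * J" by (simp add: vg)
  finally show ?thesis using int by (simp add: has_bochner_integral_iff)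
qed

lemma integrable_vec_lambda:
  fixes F :: "'a \<Rightarrow> 'k::finite \<Rightarrow> 'b::euclidean_space"
  assumes "\<And>i. integrable M (\<lambda>x. F x i)"
  shows "integrable M (\<lambda>x. \<chi> i. F x i)"
proof -
  have bl: "bounded_linear (\<lambda>y::'b. axis i y :: 'b^'k)" for i
    unfolding linear_conv_bounded_linear[symmetric]
    by (rule linearI) (simp_all add: vec_eq_iff axis_def)
  have eq: "(\<chi> i. F x i) = (\<Sum>i\<in>UNIV. axis i (F x i))" for x
    by (simp add: vec_eq_iff axis_def if_distrib sum.delta' cong: if_cong)
  show ?thesis
  proof -
    have "integrable M (\<lambda>x. axis i (F x i) :: 'b^'k)" for i
      using integrable_bounded_linear[OF bl assms] .
    then have "integrable M (\<lambda>x. \<Sum>i\<in>UNIV. axis i (F x i) :: 'b^'k)"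
      using Bochner_Integration.integrable_sum[where I=UNIV and M=M and f="\<lambda>i x. axis i (F x i) :: 'b^'k"] by blast
    then show ?thesis unfolding eq .
  qed
qed

lemma quad_form:
  assumes "quadratic_fun f"
  obtains c0 :: real and bv :: "real^'n" and A :: "real^'n^'n"
  where "\<And>x. f x = c0 + bv \<bullet> x + x \<bullet> (A *v x)"
proof -
  from assms obtain A :: "real^'n^'n" and bv :: "real^'n" and c0 :: real where
    H: "\<And>x. f x = c0 + (\<Sum>i\<in>UNIV. bv $ i * x $ i) + (\<Sum>i\<in>UNIV. \<Sum>j\<in>UNIV. A $ i $ j * x $ i * x $ j)"
    unfolding quadratic_fun_def by blast
  have "f x = c0 + bv \<bullet> x + x \<bullet> (A *v x)" for x
    unfolding H by (simp add: inner_vec_def matrix_vector_mult_def sum_distrib_left ac_simps)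
  then show ?thesis by (rule that)
qed

lemma gderiv_unique: "GDERIV f x :> g \<Longrightarrow> GDERIV f x :> g' \<Longrightarrow> g = g'"
proof -
  assume a: "GDERIV f x :> g" "GDERIV f x :> g'"
  then have "(\<lambda>h. h \<bullet> g) = (\<lambda>h. h \<bullet> g')"
    unfolding gderiv_def by (rule has_derivative_unique)
  then have "(g - g') \<bullet> g = (g - g') \<bullet> g'" by metis
  then have "(g - g') \<bullet> (g - g') = 0" by (simp add: inner_diff_right)
  then show "g = g'" by simp
qed

lemma grad_quad:
  fixes A :: "real^'n^'n" and bv :: "real^'n"
  assumes f: "\<And>x. f x = c0 + bv \<bullet> x + x \<bullet> (A *v x)"
  shows "grad f y = bv + (A + transpose A) *v y"
proof -
  have ff: "f = (\<lambda>x. c0 + bv \<bullet> x + x \<bullet> (A *v x))" using f by (rule ext)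
  have "GDERIV f y :> (bv + (A + transpose A) *v y)"
    unfolding gderiv_def ff
  proof (rule has_derivative_eq_rhs)
    show "((\<lambda>x. c0 + bv \<bullet> x + x \<bullet> (A *v x)) has_derivative (\<lambda>h. 0 + bv \<bullet> h + (y \<bullet> (A *v h) + h \<bullet> (A *v y)))) (at y)"
      by (intro derivative_intros bounded_linear_imp_has_derivative matrix_vector_mul_bounded_linear)
    show "(\<lambda>h. 0 + bv \<bullet> h + (y \<bullet> (A *v h) + h \<bullet> (A *v y))) = (\<lambda>h. h \<bullet> (bv + (A + transpose A) *v y))"
      by (rule ext) (simp add: matrix_vector_mult_add_rdistrib inner_add_right dot_lmul_matrix[symmetric] inner_commute)
  qed
  then show ?thesis
    unfolding grad_def by (metis (mono_tags) gderiv_unique someI)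
qed

lemma poly4_inst:
  fixes u v :: "real ^ 'n"
  shows "has_bochner_integral std_gauss (\<lambda>x. k00 + k10*(u\<bullet>x) + k01*(v\<bullet>x) + k20*(u\<bullet>x)^2 + k11*((u\<bullet>x)*(v\<bullet>x)) + k02*(v\<bullet>x)^2
      + k30*(u\<bullet>x)^3 + k21*((u\<bullet>x)^2*(v\<bullet>x)) + k12*((u\<bullet>x)*(v\<bullet>x)^2)
      + k40*(u\<bullet>x)^4 + k31*((u\<bullet>x)^3*(v\<bullet>x)) + k22*((u\<bullet>x)^2*(v\<bullet>x)^2))
    (k00 + k20*(u\<bullet>u) + k11*(u\<bullet>v) + k02*(v\<bullet>v) + 3*k40*(u\<bullet>u)^2 + 3*k31*(u\<bullet>u)*(u\<bullet>v)
      + k22*((u\<bullet>u)*(v\<bullet>v) + 2*(u\<bullet>v)^2))"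
  using poly4[of k00 k10 u k01 v k20 k11 k02 k30 k21 k12 0 k40 k31 k22 0 0] by simp

lemma aff_prod_int:
  fixes u v :: "real ^ 'n"
  shows "integrable std_gauss (\<lambda>x. (a + u \<bullet> x) * (b + v \<bullet> x))"
proof -
have "integrable std_gauss (\<lambda>x. (a*b) + b*(u\<bullet>x) + a*(v\<bullet>x) + 0*(u\<bullet>x)^2 + 1*((u\<bullet>x)*(v\<bullet>x)) + 0*(v\<bullet>x)^2
      + 0*(u\<bullet>x)^3 + 0*((u\<bullet>x)^2*(v\<bullet>x)) + 0*((u\<bullet>x)*(v\<bullet>x)^2)
      + 0*(u\<bullet>x)^4 + 0*((u\<bullet>x)^3*(v\<bullet>x)) + 0*((u\<bullet>x)^2*(v\<bullet>x)^2))"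
    by (rule integrable.intros, rule poly4_inst)
  moreover have "(\<lambda>x. (a*b) + b*(u\<bullet>x) + a*(v\<bullet>x) + 0*(u\<bullet>x)^2 + 1*((u\<bullet>x)*(v\<bullet>x)) + 0*(v\<bullet>x)^2
      + 0*(u\<bullet>x)^3 + 0*((u\<bullet>x)^2*(v\<bullet>x)) + 0*((u\<bullet>x)*(v\<bullet>x)^2)
      + 0*(u\<bullet>x)^4 + 0*((u\<bullet>x)^3*(v\<bullet>x)) + 0*((u\<bullet>x)^2*(v\<bullet>x)^2)) = (\<lambda>x. (a + u \<bullet> x) * (b + v \<bullet> x))"
    by (rule ext) (simp add: algebra_simps)
  ultimately show ?thesis by simp
qed

theorem proposition2:
  fixes f :: "real ^ 'n \<Rightarrow> real" and \<theta> :: "real ^ 'n"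
  assumes "quadratic_fun f" and "norm \<theta> = 1"
  shows "sobol_proj f \<theta> =
    \<theta> \<bullet> ((\<integral>x. (let y = ((\<theta> \<bullet> x) / sqrt 2) *\<^sub>R \<theta> + (x - (\<theta> \<bullet> x) *\<^sub>R \<theta>)
                  in (\<chi> i j. grad f y $ i * grad f y $ j)) \<partial>std_gauss) *v \<theta>)"
proof -
  obtain c0 :: real and bv :: "real^'n" and A :: "real^'n^'n"
    where fq: "\<And>x. f x = c0 + bv \<bullet> x + x \<bullet> (A *v x)"
    using quad_form[OF assms(1)] by metis
  define S where "S = A + transpose A"
  define cv where "cv = \<theta> v* S"
  define \<beta> where "\<beta> = \<theta> \<bullet> bv"
  define \<alpha> where "\<alpha> = \<theta> \<bullet> (A *v \<theta>)"
  have tt: "\<theta> \<bullet> \<theta> = 1"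
  proof -
    have "\<theta> \<bullet> \<theta> = (norm \<theta>)^2" by (rule power2_norm_eq_inner[symmetric])
    then show ?thesis using assms(2) by simp
  qed
  have L: "\<theta> \<bullet> (transpose A *v x) = x \<bullet> (A *v \<theta>)" for x
  proof -
    have "\<theta> \<bullet> (transpose A *v x) = \<theta> \<bullet> (x v* A)" by simp
    also have "\<dots> = (x v* A) \<bullet> \<theta>" by (rule inner_commute)
    also have "\<dots> = x \<bullet> (A *v \<theta>)" by (rule dot_lmul_matrix)
    finally show ?thesis .
  qed
  have cvx: "cv \<bullet> x = \<theta> \<bullet> (A *v x) + x \<bullet> (A *v \<theta>)" for x
  proof -
    have "cv \<bullet> x = \<theta> \<bullet> (S *v x)" unfolding cv_def by (rule dot_lmul_matrix)
    also have "\<dots> = \<theta> \<bullet> (A *v x) + \<theta> \<bullet> (transpose A *v x)"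
      unfolding S_def by (simp only: matrix_vector_mult_add_rdistrib inner_add_right)
    finally show ?thesis by (simp only: L)
  qed
  have q: "\<theta> \<bullet> cv = 2 * \<alpha>"
    using cvx[of \<theta>] unfolding \<alpha>_def by (simp add: inner_commute)
  have Ad: "A *v (x + d *\<^sub>R \<theta>) = A *v x + d *\<^sub>R (A *v \<theta>)" for x d
    by (simp add: matrix_vector_right_distrib matrix_vector_mult_scaleR)
  have shift: "f (x + d *\<^sub>R \<theta>) = f x + d * (\<beta> + cv \<bullet> x) + d^2 * \<alpha>" for x d
  proof -
    have "f (x + d *\<^sub>R \<theta>) = c0 + bv \<bullet> x + d * (bv \<bullet> \<theta>) + (x \<bullet> (A *v x) + d * (x \<bullet> (A *v \<theta>)) + d * (\<theta> \<bullet> (A *v x)) + d * d * (\<theta> \<bullet> (A *v \<theta>)))"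
      unfolding fq Ad by (simp only: inner_add_left inner_add_right inner_scaleR_left inner_scaleR_right) (simp add: algebra_simps)
    then show ?thesis unfolding fq cvx \<beta>_def \<alpha>_def by (simp add: algebra_simps power2_eq_square inner_commute[of bv])
  qed
  have arg: "(\<theta> \<bullet> z) *\<^sub>R \<theta> + (x - (\<theta> \<bullet> x) *\<^sub>R \<theta>) = x + (\<theta> \<bullet> z - \<theta> \<bullet> x) *\<^sub>R \<theta>" for x z :: "real^'n"
    by (simp add: algebra_simps)
  have integrand: "(f x - f ((\<theta> \<bullet> z) *\<^sub>R \<theta> + (x - (\<theta> \<bullet> x) *\<^sub>R \<theta>)))\<^sup>2
      = ((\<theta> \<bullet> z - \<theta> \<bullet> x) * (\<beta> + cv \<bullet> x) + (\<theta> \<bullet> z - \<theta> \<bullet> x)^2 * \<alpha>)\<^sup>2" for x z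
    unfolding arg shift by (simp add: power2_eq_square algebra_simps)
  note C0 = poly4_inst[of 0 0 \<theta> 0 cv "\<beta>^2" 0 0 "-2*\<alpha>*\<beta>" "2*\<beta>" 0 "\<alpha>^2" "-2*\<alpha>" 1]
  note C1 = poly4_inst[of 0 "-2*\<beta>^2" \<theta> 0 cv "6*\<alpha>*\<beta>" "-4*\<beta>" 0 "-4*\<alpha>^2" "6*\<alpha>" "-2" 0 0 0]
  note C2 = poly4_inst[of "\<beta>^2" "-6*\<alpha>*\<beta>" \<theta> "2*\<beta>" cv "6*\<alpha>^2" "-6*\<alpha>" 1 0 0 0 0 0 0]
  note C3 = poly4_inst[of "2*\<alpha>*\<beta>" "-4*\<alpha>^2" \<theta> "2*\<alpha>" cv 0 0 0 0 0 0 0 0 0]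
  note C4 = poly4_inst[of "\<alpha>^2" 0 \<theta> 0 cv 0 0 0 0 0 0 0 0 0]
  note HL = has_bochner_integral_add[OF has_bochner_integral_add[OF has_bochner_integral_add[OF has_bochner_integral_add[OF
      hbi_pair[OF C0 gauss_m0] hbi_pair[OF C1 lin1[of \<theta>]]] hbi_pair[OF C2 lin2[of \<theta> \<theta>]]]
      hbi_pair[OF C3 lin3[of \<theta> \<theta> \<theta>]]] hbi_pair[OF C4 lin4[of \<theta> \<theta> \<theta> \<theta>]]]
  have HL2: "has_bochner_integral (std_gauss \<Otimes>\<^sub>M std_gauss)
     (\<lambda>p. (f (fst p) - f ((\<theta> \<bullet> snd p) *\<^sub>R \<theta> + (fst p - (\<theta> \<bullet> fst p) *\<^sub>R \<theta>)))\<^sup>2)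
     (2 * \<beta>^2 + 2 * (cv \<bullet> cv) - 4 * \<alpha>^2)"
  proof (rule hbi_eq[OF HL], goal_cases)
    case (1 p)
    obtain x z where p: "p = (x, z)" by (cases p)
    show ?case
      unfolding p fst_conv snd_conv integrand
      by (simp add: power2_eq_square power3_eq_cube power4_eq_xxxx algebra_simps)
  next
    case 2
    show ?case
      by (simp add: tt q power2_eq_square algebra_simps)
  qed
  have LHS: "sobol_proj f \<theta> = \<beta>^2 + cv \<bullet> cv - 2 * \<alpha>^2"
    unfolding sobol_proj_def using has_bochner_integral_integral_eq[OF HL2] by simp
  define \<kappa> where "\<kappa> = 1 - 1 / sqrt 2"
  define K where "K = \<kappa> * (\<theta> \<bullet> cv)"
  define G where "G x = bv + S *v (x - (\<kappa> * (\<theta> \<bullet> x)) *\<^sub>R \<theta>)" for x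
  define w where "w i = S $ i - (\<kappa> * (S $ i \<bullet> \<theta>)) *\<^sub>R \<theta>" for i
  have yeq: "((\<theta> \<bullet> x) / sqrt 2) *\<^sub>R \<theta> + (x - (\<theta> \<bullet> x) *\<^sub>R \<theta>) = x - (\<kappa> * (\<theta> \<bullet> x)) *\<^sub>R \<theta>" for x
    unfolding \<kappa>_def by (simp add: algebra_simps)
  have gradG: "grad f (((\<theta> \<bullet> x) / sqrt 2) *\<^sub>R \<theta> + (x - (\<theta> \<bullet> x) *\<^sub>R \<theta>)) = G x" for x
    unfolding yeq G_def S_def by (rule grad_quad[OF fq])
  have Gi: "G x $ i = bv $ i + w i \<bullet> x" for x i
    unfolding G_def w_def by (simp add: matrix_vector_mul_component inner_diff_right inner_diff_left algebra_simps inner_commute[of \<theta>])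
  define M where "M x = (\<chi> i j. G x $ i * G x $ j)" for x
  have Meq: "(\<lambda>x. (let y = ((\<theta> \<bullet> x) / sqrt 2) *\<^sub>R \<theta> + (x - (\<theta> \<bullet> x) *\<^sub>R \<theta>)
                  in (\<chi> i j. grad f y $ i * grad f y $ j))) = M"
    by (rule ext) (simp add: Let_def gradG M_def)
  have intM: "integrable std_gauss M"
    unfolding M_def
  proof (intro integrable_vec_lambda)
    fix i j
    show "integrable std_gauss (\<lambda>x. G x $ i * G x $ j)"
      unfolding Gi by (rule aff_prod_int)
  qed
  define T where "T N = \<theta> \<bullet> (N *v \<theta>)" for N :: "real^'n^'n"
  have blT: "bounded_linear T"
    unfolding linear_conv_bounded_linear[symmetric] T_def
    by (rule linearI) (simp_all add: matrix_vector_mult_add_rdistrib inner_add_right scaleR_matrix_vector_assoc[symmetric])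
  have TM: "T (M x) = (\<beta> + cv \<bullet> x - K * (\<theta> \<bullet> x))^2" for x
  proof -
    have "T (M x) = (\<theta> \<bullet> G x)^2"
      unfolding T_def M_def
      by (simp add: inner_vec_def matrix_vector_mult_def power2_eq_square sum_product sum_distrib_left ac_simps)
    also have "\<theta> \<bullet> G x = \<beta> + cv \<bullet> x - K * (\<theta> \<bullet> x)"
    proof -
      have "\<theta> \<bullet> G x = \<theta> \<bullet> bv + \<theta> \<bullet> (S *v (x - (\<kappa> * (\<theta> \<bullet> x)) *\<^sub>R \<theta>))"
        unfolding G_def by (rule inner_add_right)
      also have "\<theta> \<bullet> (S *v (x - (\<kappa> * (\<theta> \<bullet> x)) *\<^sub>R \<theta>)) = cv \<bullet> (x - (\<kappa> * (\<theta> \<bullet> x)) *\<^sub>R \<theta>)"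
        unfolding cv_def by (rule dot_lmul_matrix[symmetric])
      also have "\<dots> = cv \<bullet> x - \<kappa> * (\<theta> \<bullet> x) * (\<theta> \<bullet> cv)"
        by (simp add: inner_diff_right inner_commute[of cv \<theta>])
      finally show ?thesis unfolding \<beta>_def K_def by (simp add: algebra_simps)
    qed
    finally show ?thesis .
  qed
  note CR = poly4_inst[of "\<beta>^2" "-2*K*\<beta>" \<theta> "2*\<beta>" cv "K^2" "-2*K" 1 0 0 0 0 0 0]
  have HR: "has_bochner_integral std_gauss (\<lambda>x. T (M x)) (\<beta>^2 + K^2 - 2 * K * (\<theta> \<bullet> cv) + cv \<bullet> cv)"
  proof (rule hbi_eq[OF CR], goal_cases)
    case (1 x)
    show ?case unfolding TM by (simp add: power2_eq_square algebra_simps)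
  next
    case 2
    show ?case by (simp add: tt power2_eq_square algebra_simps)
  qed
  have k2: "\<kappa>^2 - 2 * \<kappa> = - 1/2"
  proof -
    have "(1 / sqrt 2)^2 = (1/2::real)" by (simp add: power_divide)
    then show ?thesis unfolding \<kappa>_def by (simp add: power2_eq_square algebra_simps)
  qed
  have "\<theta> \<bullet> ((\<integral>x. (let y = ((\<theta> \<bullet> x) / sqrt 2) *\<^sub>R \<theta> + (x - (\<theta> \<bullet> x) *\<^sub>R \<theta>)
                  in (\<chi> i j. grad f y $ i * grad f y $ j)) \<partial>std_gauss) *v \<theta>) = T (integral\<^sup>L std_gauss M)"
    unfolding Meq T_def ..
  also have "\<dots> = (\<integral>x. T (M x) \<partial>std_gauss)"
    by (rule integral_bounded_linear[OF blT intM, symmetric])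
  also have "\<dots> = \<beta>^2 + K^2 - 2 * K * (\<theta> \<bullet> cv) + cv \<bullet> cv"
    using HR by (rule has_bochner_integral_integral_eq)
  also have "\<dots> = \<beta>^2 + cv \<bullet> cv - 2 * \<alpha>^2"
  proof -
    have "K^2 - 2 * K * (\<theta> \<bullet> cv) = 4 * \<alpha>^2 * (\<kappa>^2 - 2 * \<kappa>)"
      unfolding K_def q by (simp add: power2_eq_square algebra_simps)
    then show ?thesis using k2 by simp
  qed
  finally show ?thesis using LHS by simp
qed

end
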